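(* Let $d\ge1$ and $\tilde\epsilon>0$ be sufficiently small (below an absolute constant), and set $p = \frac{2}{7}\sqrt{\frac{\log(3d)}{\tilde\epsilon}}$, assumed to be a positive integer, and $\gamma = 14\sqrt{\tilde\epsilon\log(3d)}$. Let $\Sigma\in\mathbb{R}^{d\times d}$ be symmetric positive semidefinite and let $\mathbf{M} = \mathbf{M}_G+\mathbf{M}_B$ with $\mathbf{M}_G\succeq 0$, $\mathbf{M}_B\succeq0$, $\|\mathbf{M}\|_p\le(1+\tilde\epsilon)\|\Sigma\|_p$ and $(1+\tilde\epsilon)\Sigma\succeq\mathbf{M}_G\succeq(1-\tilde\epsilon)\Sigma$. Let $\mathbf{M} = \sum_{j\in[d]}\lambda_jv_jv_j^\top$ and $\Sigma = \sum_{j\in[d]}\sigma_ju_ju_j^\top$ be eigendecompositions with $\lambda_1\ge\dots\ge\lambda_d$ and $\sigma_1\ge\dots\ge\sigma_d$, and let $t\in[d]$ satisfy $\sigma_{t+1}<(1-\gamma)\sigma_1$. Then $$\max_{j\in[t]} v_j^\top\Sigma v_j\ge(1-\gamma)\|\Sigma\|_\infty.$$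
   Context: $\|\cdot\|_p$ is the Schatten-$p$ norm ($\ell_p$ norm of the eigenvalues), $\|\Sigma\|_\infty = \sigma_1$ the largest eigenvalue; $\succeq$ is the Loewner order. (If $t = d$, the condition on $\sigma_{t+1}$ is vacuous.) *)

theory Defs
  imports Complex_Main
begin

text \<open>Real d x d matrices are represented as functions nat => nat => real with
  entries indexed by {..<d}; vectors in R^d as nat => real indexed by {..<d}.
  The dimension d is an explicit natural number so that the absolute constant
  in the statement can be quantified before d.\<close>

definition qform :: "nat \<Rightarrow> (nat \<Rightarrow> nat \<Rightarrow> real) \<Rightarrow> (nat \<Rightarrow> real) \<Rightarrow> real" where
  "qform d A x = (\<Sum>i<d. \<Sum>k<d. x i * A i k * x k)"

definition symmetric_mat :: "nat \<Rightarrow> (nat \<Rightarrow> nat \<Rightarrow> real) \<Rightarrow> bool" where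
  "symmetric_mat d A \<longleftrightarrow> (\<forall>i<d. \<forall>k<d. A i k = A k i)"

definition psd :: "nat \<Rightarrow> (nat \<Rightarrow> nat \<Rightarrow> real) \<Rightarrow> bool" where
  "psd d A \<longleftrightarrow> symmetric_mat d A \<and> (\<forall>x. qform d A x \<ge> 0)"

definition loewner_ge :: "nat \<Rightarrow> (nat \<Rightarrow> nat \<Rightarrow> real) \<Rightarrow> (nat \<Rightarrow> nat \<Rightarrow> real) \<Rightarrow> bool" where
  "loewner_ge d A B \<longleftrightarrow> psd d (\<lambda>i k. A i k - B i k)"

text \<open>Eigendecomposition A = sum_j lam_j v_j v_j^T with orthonormal v_0,...,v_{d-1}
  and eigenvalues sorted non-increasingly (0-indexed: lam 0 \<ge> lam 1 \<ge> ...).\<close>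
definition eigdecomp :: "nat \<Rightarrow> (nat \<Rightarrow> nat \<Rightarrow> real) \<Rightarrow> (nat \<Rightarrow> real) \<Rightarrow> (nat \<Rightarrow> nat \<Rightarrow> real) \<Rightarrow> bool" where
  "eigdecomp d A lam v \<longleftrightarrow>
     (\<forall>j<d. \<forall>l<d. (\<Sum>i<d. v j i * v l i) = (if j = l then 1 else 0)) \<and>
     (\<forall>i<d. \<forall>k<d. A i k = (\<Sum>j<d. lam j * v j i * v j k)) \<and>
     (\<forall>j l. j \<le> l \<longrightarrow> l < d \<longrightarrow> lam l \<le> lam j)"

definition eigenvalues :: "nat \<Rightarrow> (nat \<Rightarrow> nat \<Rightarrow> real) \<Rightarrow> (nat \<Rightarrow> real)" where
  "eigenvalues d A = (SOME lam. \<exists>v. eigdecomp d A lam v)"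

definition schatten :: "nat \<Rightarrow> real \<Rightarrow> (nat \<Rightarrow> nat \<Rightarrow> real) \<Rightarrow> real" where
  "schatten d p A = (\<Sum>j<d. \<bar>eigenvalues d A j\<bar> powr p) powr (1 / p)"

end

theory Submission
  imports Defs "Jordan_Normal_Form.Determinant" "HOL-Analysis.Analysis"
begin


lemma jensen_pow:
  fixes w x :: "'a \<Rightarrow> real"
  assumes "finite S" "sum w S = 1" "\<And>i. i \<in> S \<Longrightarrow> w i \<ge> 0" "\<And>i. i \<in> S \<Longrightarrow> x i \<ge> 0"
  shows "(\<Sum>i\<in>S. w i * x i) ^ n \<le> (\<Sum>i\<in>S. w i * x i ^ n)"
proof -
  have cv: "convex_on {0::real..} (\<lambda>x. x^n)"
  proof (cases "even n")
    case True
    then show ?thesis using convex_power_even convex_on_subset by blast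
  next
    case False
    then show ?thesis using convex_power_odd by blast
  qed
  have "S \<noteq> {}" using assms(2) by auto
  from convex_on_sum[OF assms(1) this cv assms(2) assms(3), of x] assms(4)
  show ?thesis by auto
qed

lemma mono_fun:
  fixes s x y :: real
  assumes "0 \<le> x" "x \<le> y" "real (Suc n) * y \<le> real n * s"
  shows "(s - x) * x ^ n \<le> (s - y) * y ^ n"
proof -
  have "(\<lambda>z. (s - z) * z ^ n) x \<le> (\<lambda>z. (s - z) * z ^ n) y"
  proof (rule DERIV_nonneg_imp_increasing_open[OF assms(2)])
    fix z assume z: "x < z" "z < y"
    have "DERIV (\<lambda>z. (s - z) * z ^ n) z :> (- 1) * z ^ n + (s - z) * (real n * z ^ (n - 1))"
      by (auto intro!: derivative_eq_intros)
    moreover have "(- 1) * z ^ n + (s - z) * (real n * z ^ (n - 1)) \<ge> 0"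
    proof (cases n)
      case 0 then show ?thesis using z assms by simp
    next
      case (Suc m)
      have zp: "z > 0" using z assms by linarith
      have eq: "(- 1) * z ^ n + (s - z) * (real n * z ^ (n - 1)) = z ^ m * ((s - z) * real n - z)"
        using Suc by (simp add: algebra_simps)
      have "z * real (Suc n) \<le> y * real (Suc n)" using z by (intro mult_right_mono) auto
      then have ge: "(s - z) * real n - z \<ge> 0" using z assms by (simp add: algebra_simps)
      show ?thesis unfolding eq using zp ge by simp
    qed
    ultimately show "\<exists>l. DERIV (\<lambda>z. (s - z) * z ^ n) z :> l \<and> l \<ge> 0" by blast
  next
    show "continuous_on {x..y} (\<lambda>z. (s - z) * z ^ n)" by (intro continuous_intros)
  qed
  then show ?thesis by simp
qed

lemma eps_bounds:
  fixes e :: real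
  assumes "0 < e" "real n * e \<le> 1/49" "n \<ge> 1"
  shows "(1 - e) ^ n \<ge> 1 - real n * e" "(1 + e) ^ n - (1 - e) ^ n \<le> 3 * (real n * e)"
proof -
  have e1: "e \<le> 1/49"
  proof (cases n)
    case 0 then show ?thesis using assms by simp
  next
    case (Suc m)
    then have "1 * e \<le> real n * e" using assms by (intro mult_right_mono) auto
    then show ?thesis using assms by linarith
  qed
  have b: "1 + real n * (- e) \<le> (1 + - e) ^ n"
    by (rule Bernoulli_inequality) (use e1 in simp)
  then show g: "(1 - e) ^ n \<ge> 1 - real n * e" by simp
  have ee1: "e * e \<le> 1" using e1 assms by (intro mult_le_one) auto
  have "(1 + e) ^ n * (1 - e) ^ n = (1 - e^2) ^ n" by (simp add: power_mult_distrib[symmetric] power2_eq_square algebra_simps)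
  also have "\<dots> \<le> 1" using e1 assms ee1 by (intro power_le_one) (auto simp: power2_eq_square)
  finally have p1: "(1 + e) ^ n * (1 - e) ^ n \<le> 1" .
  have pos: "1 - real n * e > 0" using assms by simp
  have "(1 + e) ^ n * (1 - real n * e) \<le> (1 + e) ^ n * (1 - e) ^ n"
    using g by (intro mult_left_mono) (use assms in auto)
  with p1 have "(1 + e) ^ n * (1 - real n * e) \<le> 1" by linarith
  moreover have "(1 + 2 * (real n * e)) * (1 - real n * e) \<ge> 1"
  proof -
    have "(1 + 2 * (real n * e)) * (1 - real n * e) = 1 + (real n * e) * (1 - 2 * (real n * e))"
      by (simp add: algebra_simps)
    moreover have "(real n * e) * (1 - 2 * (real n * e)) \<ge> 0" using assms by auto
    ultimately show ?thesis by linarith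
  qed
  ultimately have "(1 + e) ^ n * (1 - real n * e) \<le> (1 + 2 * (real n * e)) * (1 - real n * e)" by linarith
  then have "(1 + e) ^ n \<le> 1 + 2 * (real n * e)" using pos by simp
  then show "(1 + e) ^ n - (1 - e) ^ n \<le> 3 * (real n * e)" using g by linarith
qed

lemma core:
  fixes d t n :: nat and lam sg :: "nat \<Rightarrow> real" and c :: "nat \<Rightarrow> nat \<Rightarrow> real" and e g :: real
  assumes c_nn: "\<And>j k. c j k \<ge> 0"
  and row: "\<And>j. j<d \<Longrightarrow> (\<Sum>k<d. c j k) = 1"
  and col: "\<And>k. k<d \<Longrightarrow> (\<Sum>j<d. c j k) = 1"
  and lam_nn: "\<And>j. j<d \<Longrightarrow> lam j \<ge> 0"
  and lam_sorted: "\<And>j l. j \<le> l \<Longrightarrow> l < d \<Longrightarrow> lam l \<le> lam j"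
  and sg_nn: "\<And>k. k<d \<Longrightarrow> sg k \<ge> 0"
  and sg_sorted: "\<And>j l. j \<le> l \<Longrightarrow> l < d \<Longrightarrow> sg l \<le> sg j"
  and sg0: "sg 0 > 0"
  and jen: "\<And>k. k<d \<Longrightarrow> (\<Sum>j<d. c j k * lam j) \<ge> (1-e) * sg k"
  and schat: "(\<Sum>j<d. lam j ^ n) \<le> (1+e)^n * (\<Sum>k<d. sg k ^ n)"
  and t1: "1 \<le> t" and t2: "t \<le> d" and t3: "t < d \<longrightarrow> sg t < (1-g) * sg 0"
  and g0: "0 < g" and g1: "g < 1" and neps: "real n * e = g/49" and eps: "e > 0"
  and tail: "real d * (1-g/4)^n \<le> 1/3" and ng: "1 \<le> real n * g/4"
  shows "\<exists>j<t. (\<Sum>k<d. sg k * c j k) \<ge> (1-g) * sg 0"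
proof (rule ccontr)
  assume H: "\<not> ?thesis"
  then have H: "\<And>j. j < t \<Longrightarrow> (\<Sum>k<d. sg k * c j k) < (1-g) * sg 0" by auto
  define s where "s = sg 0"
  define a where "a j = lam j ^ n" for j
  define T where "T k = (\<Sum>j<d. a j * c j k)" for k
  define m where "m k = ((1 - e) * sg k) ^ n" for k
  define A where "A = (\<Sum>j<t. a j)"
  define B where "B = (\<Sum>j\<in>{t..<d}. a j)"
  define y where "y = (1 - g/4) * s"
  define ee where "ee k = (if y \<le> sg k then 1 else 0::real)" for k
  define SH where "SH = (\<Sum>k<d. ee k * sg k ^ n)"
  have d0: "0 < d" using t1 t2 by simp
  have s0: "s > 0" using sg0 s_def by simp
  have n1: "n \<ge> 1" using ng g1 by (cases n) auto
  have e1: "e \<le> 1/49"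
  proof -
    have "1 * e \<le> real n * e" using n1 eps by (intro mult_right_mono) auto
    then show ?thesis using neps g1 by simp
  qed
  have a_nn: "a j \<ge> 0" if "j < d" for j using lam_nn[OF that] a_def by simp
  have sg_le: "sg k \<le> s" if "k < d" for k using sg_sorted[of 0 k] that s_def by simp
  have T_ge: "T k \<ge> m k" if k: "k < d" for k
  proof -
    have "(\<Sum>j<d. c j k * lam j) ^ n \<le> (\<Sum>j<d. c j k * lam j ^ n)"
      by (rule jensen_pow) (use col[OF k] c_nn lam_nn in auto)
    moreover have "((1 - e) * sg k) ^ n \<le> (\<Sum>j<d. c j k * lam j) ^ n"
      by (rule power_mono[OF jen[OF k]]) (use e1 sg_nn[OF k] in simp)
    ultimately show ?thesis unfolding T_def m_def a_def by (simp add: mult.commute)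
  qed
  have m_nn: "m k \<ge> 0" if "k < d" for k using e1 sg_nn[OF that] m_def by simp
  have m_le: "m k \<le> sg k ^ n" if "k < d" for k
  proof -
    have "m k = (1 - e) ^ n * sg k ^ n" by (simp add: m_def power_mult_distrib)
    also have "\<dots> \<le> 1 * sg k ^ n"
      by (intro mult_right_mono power_le_one) (use e1 eps sg_nn[OF that] in auto)
    finally show ?thesis by simp
  qed
  have S1: "(\<Sum>j<d. a j * (\<Sum>k<d. sg k * c j k)) = (\<Sum>k<d. sg k * T k)"
  proof -
    have "(\<Sum>j<d. a j * (\<Sum>k<d. sg k * c j k)) = (\<Sum>j<d. \<Sum>k<d. sg k * (a j * c j k))"
      by (simp add: sum_distrib_left mult.left_commute)
    also have "\<dots> = (\<Sum>k<d. \<Sum>j<d. sg k * (a j * c j k))" by (rule sum.swap)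
    also have "\<dots> = (\<Sum>k<d. sg k * T k)" by (simp add: T_def sum_distrib_left)
    finally show ?thesis .
  qed
  have q_le: "(\<Sum>k<d. sg k * c j k) \<le> s" if "j < d" for j
  proof -
    have "(\<Sum>k<d. sg k * c j k) \<le> (\<Sum>k<d. s * c j k)"
      by (intro sum_mono mult_right_mono) (use sg_le c_nn in auto)
    also have "\<dots> = s" using row[OF that] by (simp add: sum_distrib_left[symmetric])
    finally show ?thesis .
  qed
  have split: "{..<d} = {..<t} \<union> {t..<d}" using t2 by auto
  have S2: "(\<Sum>j<d. a j * (\<Sum>k<d. sg k * c j k)) \<le> (1 - g) * s * A + s * B"
  proof -
    have "(\<Sum>j<d. a j * (\<Sum>k<d. sg k * c j k)) = (\<Sum>j<t. a j * (\<Sum>k<d. sg k * c j k)) + (\<Sum>j\<in>{t..<d}. a j * (\<Sum>k<d. sg k * c j k))"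
      by (subst split, subst sum.union_disjoint) auto
    also have "\<dots> \<le> (\<Sum>j<t. a j * ((1 - g) * s)) + (\<Sum>j\<in>{t..<d}. a j * s)"
      apply (intro add_mono sum_mono mult_left_mono)
      using H q_le a_nn t2 s_def by (auto simp: less_imp_le)
    also have "\<dots> = A * ((1 - g) * s) + B * s" unfolding A_def B_def
      by (simp add: sum_distrib_right)
    also have "\<dots> = (1 - g) * s * A + s * B" by (simp add: algebra_simps)
    finally show ?thesis .
  qed
  have suma: "(\<Sum>j<d. a j) = A + B" unfolding A_def B_def by (subst split, subst sum.union_disjoint) auto
  have S3: "(\<Sum>k<d. T k) = A + B"
  proof -
    have "(\<Sum>k<d. T k) = (\<Sum>j<d. \<Sum>k<d. a j * c j k)"
      unfolding T_def by (rule sum.swap)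
    also have "\<dots> = (\<Sum>j<d. a j * (\<Sum>k<d. c j k))" by (simp add: sum_distrib_left)
    also have "\<dots> = (\<Sum>j<d. a j)" using row by simp
    also have "\<dots> = A + B" using suma .
    finally show ?thesis .
  qed
  have S4: "(\<Sum>k<d. sg k * T k) = s * (A + B) - (\<Sum>k<d. (s - sg k) * T k)"
    by (simp add: S3[symmetric] sum_distrib_left sum_subtractf[symmetric] algebra_simps)
  have R: "g * s * A \<le> (\<Sum>k<d. (s - sg k) * T k)"
    using S1 S2 S4 by (simp add: algebra_simps)
  have sumT: "(\<Sum>k<d. T k) \<le> (1+e)^n * (\<Sum>k<d. sg k ^ n)"
    using S3 schat suma unfolding a_def by simp
  have summ: "(\<Sum>k<d. m k) = (1-e)^n * (\<Sum>k<d. sg k ^ n)"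
    by (simp add: m_def power_mult_distrib sum_distrib_left)
  have eb: "(1 + e) ^ n - (1 - e) ^ n \<le> 3 * (real n * e)" "(1 - e) ^ n \<ge> 1 - real n * e"
    using eps_bounds[of e n] eps neps g1 n1 by auto
  have sgn_nn: "(\<Sum>k<d. sg k ^ n) \<ge> 0" using sg_nn by (auto intro: sum_nonneg)
  have S5: "(\<Sum>k<d. T k - m k) \<le> 3 * (g/49) * (\<Sum>k<d. sg k ^ n)"
  proof -
    have "(\<Sum>k<d. T k - m k) = (\<Sum>k<d. T k) - (\<Sum>k<d. m k)" by (simp add: sum_subtractf)
    also have "\<dots> \<le> ((1 + e) ^ n - (1 - e) ^ n) * (\<Sum>k<d. sg k ^ n)"
      using sumT summ by (simp add: algebra_simps)
    also have "\<dots> \<le> 3 * (g/49) * (\<Sum>k<d. sg k ^ n)"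
      using eb neps sgn_nn by (intro mult_right_mono) auto
    finally show ?thesis .
  qed
  have S6: "(\<Sum>k<d. (s - sg k) * T k) \<le> (\<Sum>k<d. (s - sg k) * sg k ^ n) + s * (\<Sum>k<d. T k - m k)"
  proof -
    have "(s - sg k) * T k \<le> (s - sg k) * sg k ^ n + s * (T k - m k)" if k: "k < d" for k
    proof -
      have "(s - sg k) * T k = (s - sg k) * m k + (s - sg k) * (T k - m k)" by (simp add: algebra_simps)
      also have "\<dots> \<le> (s - sg k) * sg k ^ n + s * (T k - m k)"
        using sg_le[OF k] sg_nn[OF k] m_le[OF k] T_ge[OF k]
        by (intro add_mono mult_left_mono mult_right_mono) auto
      finally show ?thesis .
    qed
    then have "(\<Sum>k<d. (s - sg k) * T k) \<le> (\<Sum>k<d. (s - sg k) * sg k ^ n + s * (T k - m k))"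
      by (intro sum_mono) auto
    then show ?thesis by (simp add: sum.distrib sum_distrib_left)
  qed
  have yn: "real d * y ^ n \<le> s ^ n / 3"
  proof -
    have "real d * y ^ n = (real d * (1-g/4)^n) * s ^ n" by (simp add: y_def power_mult_distrib)
    also have "\<dots> \<le> (1/3) * s ^ n" using tail s0 by (intro mult_right_mono) auto
    finally show ?thesis by simp
  qed
  have y0: "y \<ge> 0" using g1 s0 y_def by simp
  have S7a: "(s - sg k) * sg k ^ n \<le> (g/4) * s * (ee k * sg k ^ n + y ^ n)" if k: "k < d" for k
  proof (cases "y \<le> sg k")
    case True
    then have "(s - sg k) * sg k ^ n \<le> (g/4 * s) * sg k ^ n"
      using sg_nn[OF k] by (intro mult_right_mono) (auto simp: y_def algebra_simps)
    moreover have "(g/4) * s * y ^ n \<ge> 0" using g0 s0 y0 by simp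
    ultimately show ?thesis using True by (simp add: ee_def algebra_simps)
  next
    case False
    have "(s - sg k) * sg k ^ n \<le> (s - y) * y ^ n"
    proof (rule mono_fun)
      show "0 \<le> sg k" using sg_nn[OF k] .
      show "sg k \<le> y" using False by simp
      have "real (Suc n) * (g/4) \<ge> 1" using ng g0 by (simp add: algebra_simps)
      then have "real (Suc n) * (g/4) * s \<ge> s" using s0 by simp
      then show "real (Suc n) * y \<le> real n * s" by (simp add: y_def algebra_simps)
    qed
    also have "\<dots> = (g/4) * s * y ^ n" by (simp add: y_def algebra_simps)
    finally show ?thesis using False by (simp add: ee_def)
  qed
  have S7b: "sg k ^ n \<le> ee k * sg k ^ n + y ^ n" if k: "k < d" for k
  proof (cases "y \<le> sg k")
    case True then show ?thesis using y0 by (simp add: ee_def)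
  next
    case False then show ?thesis using sg_nn[OF k] by (simp add: ee_def power_mono)
  qed
  have S8a: "(\<Sum>k<d. (s - sg k) * sg k ^ n) \<le> (g/4) * s * (SH + s ^ n / 3)"
  proof -
    have "(\<Sum>k<d. (s - sg k) * sg k ^ n) \<le> (\<Sum>k<d. (g/4) * s * (ee k * sg k ^ n + y ^ n))"
      using S7a by (intro sum_mono) auto
    also have "\<dots> = (g/4) * s * (\<Sum>k<d. ee k * sg k ^ n + y ^ n)"
      by (rule sum_distrib_left[symmetric])
    also have "\<dots> = (g/4) * s * (SH + real d * y ^ n)"
      by (simp add: SH_def sum.distrib)
    also have "\<dots> \<le> (g/4) * s * (SH + s ^ n / 3)"
      using yn g0 s0 by (intro mult_left_mono) auto
    finally show ?thesis .
  qed
  have S8b: "(\<Sum>k<d. sg k ^ n) \<le> SH + s ^ n / 3"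
  proof -
    have "(\<Sum>k<d. sg k ^ n) \<le> (\<Sum>k<d. ee k * sg k ^ n + y ^ n)"
      using S7b by (intro sum_mono) auto
    also have "\<dots> = SH + real d * y ^ n" by (simp add: SH_def sum.distrib)
    finally show ?thesis using yn by simp
  qed
  have Aub: "g * s * A \<le> (g/4) * s * (SH + s ^ n / 3) + s * (3 * (g/49) * (SH + s ^ n / 3))"
  proof -
    have "s * (\<Sum>k<d. T k - m k) \<le> s * (3 * (g/49) * (\<Sum>k<d. sg k ^ n))"
      using S5 s0 by (intro mult_left_mono) auto
    also have "\<dots> \<le> s * (3 * (g/49) * (SH + s ^ n / 3))"
      using S8b s0 g0 by (intro mult_left_mono) auto
    finally show ?thesis using R S6 S8a by linarith
  qed
  then have Aub2: "A \<le> (1/4 + 3/49) * (SH + s ^ n / 3)"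
  proof -
    have eq: "(g/4) * s * Z + s * (3 * (g/49) * Z) = (g * s) * ((1/4 + 3/49) * Z)" for Z
      by (simp add: algebra_simps)
    have "(g * s) * A \<le> (g * s) * ((1/4 + 3/49) * (SH + s ^ n / 3))"
      using Aub unfolding eq .
    then show ?thesis using g0 s0 by (simp add: mult_le_cancel_left_pos)
  qed
  have ee_nn: "0 \<le> ee k" "ee k \<le> 1" for k by (auto simp: ee_def)
  have ee_t: "ee k = 0" if "t \<le> k" "k < d" for k
  proof -
    have "sg k \<le> sg t" using sg_sorted that by auto
    moreover have "sg t < (1 - g) * s" using t3 that s_def by auto
    moreover have "(1 - g) * s \<le> y" using g0 s0 by (simp add: y_def algebra_simps)
    ultimately show ?thesis by (simp add: ee_def)
  qed
  have sum_ee: "(\<Sum>k<d. ee k) \<le> real t"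
  proof -
    have "(\<Sum>k<d. ee k) = (\<Sum>k<t. ee k) + (\<Sum>k\<in>{t..<d}. ee k)" by (subst split, subst sum.union_disjoint) auto
    also have "(\<Sum>k\<in>{t..<d}. ee k) = 0" using ee_t by auto
    also have "(\<Sum>k<t. ee k) \<le> (\<Sum>k<t. 1)" using ee_nn by (intro sum_mono) auto
    finally show ?thesis by simp
  qed
  have at: "a j \<le> a (t - 1)" if "t - 1 \<le> j" "j < d" for j
    unfolding a_def using lam_sorted[OF that] lam_nn that by (intro power_mono) auto
  have tA: "real t * a (t - 1) \<le> A"
  proof -
    have "(\<Sum>j<t. a (t - 1)) \<le> (\<Sum>j<t. a j)"
    proof (intro sum_mono)
      fix j assume "j \<in> {..<t}"
      then have "j \<le> t - 1" "t - 1 < d" using t1 t2 by auto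
      then show "a (t - 1) \<le> a j" unfolding a_def
        using lam_sorted lam_nn by (intro power_mono) auto
    qed
    then show ?thesis by (simp add: A_def)
  qed
  have S9: "(\<Sum>k<d. ee k * T k) \<le> 2 * A"
  proof -
    define C where "C j = (\<Sum>k<d. ee k * c j k)" for j
    have C_nn: "C j \<ge> 0" for j unfolding C_def using ee_nn c_nn by (auto intro: sum_nonneg)
    have C_le: "C j \<le> 1" if "j < d" for j
    proof -
      have "C j \<le> (\<Sum>k<d. c j k)" unfolding C_def using ee_nn c_nn
        by (intro sum_mono) (auto intro: mult_left_le_one_le)
      then show ?thesis using row[OF that] by simp
    qed
    have "(\<Sum>k<d. ee k * T k) = (\<Sum>k<d. \<Sum>j<d. a j * (ee k * c j k))"
      unfolding T_def by (simp add: sum_distrib_left mult.left_commute)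
    also have "\<dots> = (\<Sum>j<d. \<Sum>k<d. a j * (ee k * c j k))" by (rule sum.swap)
    also have "\<dots> = (\<Sum>j<d. a j * C j)" by (simp add: C_def sum_distrib_left)
    also have "\<dots> = (\<Sum>j<t. a j * C j) + (\<Sum>j\<in>{t..<d}. a j * C j)"
      by (subst split, subst sum.union_disjoint) auto
    also have "(\<Sum>j<t. a j * C j) \<le> A"
      unfolding A_def
    proof (intro sum_mono)
      fix j assume "j \<in> {..<t}"
      then have j: "j < d" using t2 by auto
      show "a j * C j \<le> a j" using C_le[OF j] C_nn[of j] a_nn[OF j] by (simp add: mult_right_le_one_le)
    qed
    also have "(\<Sum>j\<in>{t..<d}. a j * C j) \<le> (\<Sum>j\<in>{t..<d}. a (t - 1) * C j)"
      using at C_nn by (intro sum_mono mult_right_mono) auto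
    also have "\<dots> \<le> (\<Sum>j<d. a (t - 1) * C j)"
      using C_nn a_nn[of "t - 1"] t1 t2 by (intro sum_mono2) auto
    also have "(\<Sum>j<d. a (t - 1) * C j) = a (t - 1) * (\<Sum>k<d. ee k)"
    proof -
      have "(\<Sum>j<d. C j) = (\<Sum>j<d. \<Sum>k<d. ee k * c j k)" by (simp add: C_def)
      also have "\<dots> = (\<Sum>k<d. \<Sum>j<d. ee k * c j k)" by (rule sum.swap)
      also have "\<dots> = (\<Sum>k<d. ee k * (\<Sum>j<d. c j k))" by (simp add: sum_distrib_left)
      also have "\<dots> = (\<Sum>k<d. ee k)" by (rule sum.cong) (auto simp: col)
      finally show ?thesis by (simp add: sum_distrib_left[symmetric])
    qed
    also have "\<dots> \<le> a (t - 1) * real t"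
      using sum_ee a_nn[of "t - 1"] t1 t2 by (intro mult_left_mono) auto
    finally show ?thesis using tA by (simp add: algebra_simps)
  qed
  have S10: "(\<Sum>k<d. ee k * T k) \<ge> (48/49) * SH"
  proof -
    have "(\<Sum>k<d. ee k * T k) \<ge> (\<Sum>k<d. ee k * m k)"
      using T_ge ee_nn by (intro sum_mono mult_left_mono) auto
    moreover have "(\<Sum>k<d. ee k * m k) = (1 - e) ^ n * SH"
      unfolding SH_def m_def sum_distrib_left
      by (rule sum.cong) (auto simp: power_mult_distrib)
    moreover have "(1 - e) ^ n \<ge> 48/49" using eb neps g1 by linarith
    moreover have "SH \<ge> 0" unfolding SH_def using ee_nn sg_nn by (auto intro!: sum_nonneg)
    ultimately show ?thesis using mult_right_mono[of "48/49" "(1 - e) ^ n" SH] by linarith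
  qed
  have S11: "SH \<ge> s ^ n"
  proof -
    have "ee 0 * sg 0 ^ n \<le> SH" unfolding SH_def
      using d0 ee_nn sg_nn by (intro member_le_sum) auto
    moreover have "ee 0 = 1" using g0 s0 by (simp add: ee_def y_def s_def algebra_simps)
    ultimately show ?thesis by (simp add: s_def)
  qed
  have "s ^ n > 0" using s0 by simp
  moreover have "A \<le> (61/196) * SH + (61/588) * s ^ n" using Aub2 by (simp add: algebra_simps)
  ultimately show False using S9 S10 S11 by linarith
qed



lemma orth_complete:
  fixes v :: "nat \<Rightarrow> nat \<Rightarrow> real"
  assumes orth: "\<forall>j<d. \<forall>l<d. (\<Sum>i<d. v j i * v l i) = (if j = l then 1 else 0)"
  and "i < d" "l < d"
  shows "(\<Sum>j<d. v j i * v j l) = (if i = l then 1 else 0)"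
proof -
  define V where "V = Matrix.mat d d (\<lambda>(j, i). v j i)"
  have V: "V \<in> carrier_mat d d" unfolding V_def by simp
  have VT: "transpose_mat V \<in> carrier_mat d d" using V by simp
  have "V * transpose_mat V = 1\<^sub>m d"
  proof (rule eq_matI)
    fix j l assume jl: "j < dim_row (1\<^sub>m d)" "l < dim_col (1\<^sub>m d)"
    then have "(V * transpose_mat V) $$ (j, l) = (\<Sum>i<d. v j i * v l i)"
      unfolding V_def by (simp add: scalar_prod_def lessThan_atLeast0)
    then show "(V * transpose_mat V) $$ (j, l) = 1\<^sub>m d $$ (j, l)" using orth jl by simp
  qed (use V in auto)
  then have "transpose_mat V * V = 1\<^sub>m d" using mat_mult_left_right_inverse[OF V VT] by blast
  then have "(transpose_mat V * V) $$ (i, l) = 1\<^sub>m d $$ (i, l)" by simp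
  moreover have "(transpose_mat V * V) $$ (i, l) = (\<Sum>j<d. v j i * v j l)"
    using assms unfolding V_def by (simp add: scalar_prod_def lessThan_atLeast0)
  ultimately show ?thesis using assms by simp
qed

lemma delta_sum:
  fixes F :: "nat \<Rightarrow> real"
  assumes "j < d"
  shows "(\<Sum>m<d. (if j = m then 1 else 0) * F m) = F j"
proof -
  have "(\<Sum>m<d. (if j = m then 1 else 0) * F m) = (\<Sum>m<d. if j = m then F m else 0)"
    by (rule sum.cong) auto
  also have "\<dots> = F j" using assms by (simp add: sum.delta)
  finally show ?thesis .
qed

lemma parseval:
  fixes w :: "nat \<Rightarrow> nat \<Rightarrow> real" and x :: "nat \<Rightarrow> real"
  assumes col: "\<And>i l. i<d \<Longrightarrow> l<d \<Longrightarrow> (\<Sum>k<d. w k i * w k l) = (if i = l then 1 else 0)"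
  shows "(\<Sum>k<d. (\<Sum>i<d. x i * w k i)^2) = (\<Sum>i<d. x i ^ 2)"
proof -
  have "(\<Sum>k<d. (\<Sum>i<d. x i * w k i)^2) = (\<Sum>k<d. \<Sum>i<d. \<Sum>l<d. (x i * x l) * (w k i * w k l))"
    by (simp add: power2_eq_square sum_product algebra_simps)
  also have "\<dots> = (\<Sum>i<d. \<Sum>k<d. \<Sum>l<d. (x i * x l) * (w k i * w k l))" by (rule sum.swap)
  also have "\<dots> = (\<Sum>i<d. \<Sum>l<d. \<Sum>k<d. (x i * x l) * (w k i * w k l))"
    by (rule sum.cong[OF refl], rule sum.swap)
  also have "\<dots> = (\<Sum>i<d. \<Sum>l<d. (if i = l then 1 else 0) * (x i * x l))"
    by (intro sum.cong refl) (simp add: sum_distrib_left[symmetric] col mult.commute)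
  also have "\<dots> = (\<Sum>i<d. x i * x i)"
    by (intro sum.cong refl) (simp add: delta_sum)
  finally show ?thesis by (simp add: power2_eq_square)
qed

lemma bilin:
  fixes A :: "nat \<Rightarrow> nat \<Rightarrow> real"
  assumes dec: "\<forall>i<d. \<forall>k<d. A i k = (\<Sum>j<d. lam j * v j i * v j k)"
  shows "(\<Sum>i<d. \<Sum>k<d. x i * A i k * y k) = (\<Sum>j<d. lam j * (\<Sum>i<d. x i * v j i) * (\<Sum>k<d. y k * v j k))"
proof -
  have "(\<Sum>i<d. \<Sum>k<d. x i * A i k * y k) = (\<Sum>i<d. \<Sum>k<d. \<Sum>j<d. lam j * (x i * v j i) * (y k * v j k))"
    using dec by (intro sum.cong refl) (simp add: sum_distrib_left sum_distrib_right algebra_simps)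
  also have "\<dots> = (\<Sum>i<d. \<Sum>j<d. \<Sum>k<d. lam j * (x i * v j i) * (y k * v j k))"
    by (rule sum.cong[OF refl], rule sum.swap)
  also have "\<dots> = (\<Sum>j<d. \<Sum>i<d. \<Sum>k<d. lam j * (x i * v j i) * (y k * v j k))"
    by (rule sum.swap)
  also have "\<dots> = (\<Sum>j<d. (\<Sum>i<d. lam j * (x i * v j i)) * (\<Sum>k<d. y k * v j k))"
    by (simp only: sum_product)
  also have "\<dots> = (\<Sum>j<d. lam j * (\<Sum>i<d. x i * v j i) * (\<Sum>k<d. y k * v j k))"
    by (simp only: sum_distrib_left)
  finally show ?thesis .
qed

lemma qform_dec:
  assumes "eigdecomp d A lam v"
  shows "qform d A x = (\<Sum>j<d. lam j * (\<Sum>i<d. x i * v j i)^2)"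
  using bilin[of d A lam v x x] assms unfolding qform_def eigdecomp_def
  by (simp add: power2_eq_square mult.assoc)

lemma qform_add: "qform d (\<lambda>i k. A i k + B i k) x = qform d A x + qform d B x"
  unfolding qform_def by (simp add: sum.distrib algebra_simps)

lemma qform_diff: "qform d (\<lambda>i k. A i k - B i k) x = qform d A x - qform d B x"
  unfolding qform_def by (simp add: sum_subtractf algebra_simps)

lemma qform_scale: "qform d (\<lambda>i k. r * A i k) x = r * qform d A x"
  unfolding qform_def by (simp add: sum_distrib_left algebra_simps)

lemma qform_eigvec:
  assumes "eigdecomp d A lam v" "j < d"
  shows "qform d A (v j) = lam j"
proof -
  have orth: "\<forall>j<d. \<forall>l<d. (\<Sum>i<d. v j i * v l i) = (if j = l then 1 else 0)"
    using assms unfolding eigdecomp_def by blast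
  have "qform d A (v j) = (\<Sum>m<d. lam m * (\<Sum>i<d. v j i * v m i)^2)" using qform_dec[OF assms(1)] .
  also have "\<dots> = (\<Sum>m<d. (if j = m then 1 else 0) * lam m)"
    using orth assms(2) by (intro sum.cong refl) auto
  also have "\<dots> = lam j" using delta_sum[OF assms(2)] .
  finally show ?thesis .
qed

lemma spec_inv:
  fixes f :: "real \<Rightarrow> real"
  assumes e1: "eigdecomp d A lam v" and e2: "eigdecomp d A mu w"
  shows "(\<Sum>j<d. f (lam j)) = (\<Sum>k<d. f (mu k))"
proof -
  have ov: "\<forall>j<d. \<forall>l<d. (\<Sum>i<d. v j i * v l i) = (if j = l then 1 else 0)"
    using e1 unfolding eigdecomp_def by blast
  have ow: "\<forall>j<d. \<forall>l<d. (\<Sum>i<d. w j i * w l i) = (if j = l then 1 else 0)"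
    using e2 unfolding eigdecomp_def by blast
  have d1: "\<forall>i<d. \<forall>k<d. A i k = (\<Sum>j<d. lam j * v j i * v j k)"
    using e1 unfolding eigdecomp_def by blast
  have d2: "\<forall>i<d. \<forall>k<d. A i k = (\<Sum>j<d. mu j * w j i * w j k)"
    using e2 unfolding eigdecomp_def by blast
  have cv: "\<And>i l. i<d \<Longrightarrow> l<d \<Longrightarrow> (\<Sum>j<d. v j i * v j l) = (if i = l then 1 else 0)"
    using orth_complete[OF ov] by blast
  have cw: "\<And>i l. i<d \<Longrightarrow> l<d \<Longrightarrow> (\<Sum>j<d. w j i * w j l) = (if i = l then 1 else 0)"
    using orth_complete[OF ow] by blast
  define c where "c j k = (\<Sum>i<d. v j i * w k i)^2" for j k
  have row: "(\<Sum>k<d. c j k) = 1" if j: "j < d" for j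
  proof -
    have "(\<Sum>k<d. c j k) = (\<Sum>i<d. v j i ^ 2)" unfolding c_def by (rule parseval[OF cw])
    also have "\<dots> = 1" using ov j by (simp add: power2_eq_square)
    finally show ?thesis .
  qed
  have col: "(\<Sum>j<d. c j k) = 1" if k: "k < d" for k
  proof -
    have "(\<Sum>j<d. c j k) = (\<Sum>j<d. (\<Sum>i<d. w k i * v j i)^2)" unfolding c_def by (simp add: mult.commute)
    also have "\<dots> = (\<Sum>i<d. w k i ^ 2)" by (rule parseval[OF cv])
    also have "\<dots> = 1" using ow k by (simp add: power2_eq_square)
    finally show ?thesis .
  qed
  have key: "f (lam j) * c j k = f (mu k) * c j k" if j: "j < d" and k: "k < d" for j k
  proof -
    define s where "s = (\<Sum>i<d. v j i * w k i)"
    have "(\<Sum>i<d. \<Sum>l<d. v j i * A i l * w k l) = (\<Sum>m<d. lam m * (\<Sum>i<d. v j i * v m i) * (\<Sum>l<d. w k l * v m l))"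
      by (rule bilin[OF d1])
    also have "\<dots> = (\<Sum>m<d. (if j = m then 1 else 0) * (lam m * (\<Sum>l<d. w k l * v m l)))"
      using ov j by (intro sum.cong refl) auto
    also have "\<dots> = lam j * s" unfolding delta_sum[OF j] s_def by (simp add: mult.commute)
    finally have 1: "(\<Sum>i<d. \<Sum>l<d. v j i * A i l * w k l) = lam j * s" .
    have "(\<Sum>i<d. \<Sum>l<d. v j i * A i l * w k l) = (\<Sum>m<d. mu m * (\<Sum>i<d. v j i * w m i) * (\<Sum>l<d. w k l * w m l))"
      by (rule bilin[OF d2])
    also have "\<dots> = (\<Sum>m<d. (if k = m then 1 else 0) * (mu m * (\<Sum>i<d. v j i * w m i)))"
      using ow k by (intro sum.cong refl) auto
    also have "\<dots> = mu k * s" unfolding delta_sum[OF k] s_def by simp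
    finally have 2: "(\<Sum>i<d. \<Sum>l<d. v j i * A i l * w k l) = mu k * s" .
    show ?thesis
    proof (cases "s = 0")
      case True then show ?thesis by (simp add: c_def s_def[symmetric])
    next
      case False
      with 1 2 have "lam j = mu k" by simp
      then show ?thesis by simp
    qed
  qed
  have "(\<Sum>j<d. f (lam j)) = (\<Sum>j<d. \<Sum>k<d. f (lam j) * c j k)"
    using row by (simp add: sum_distrib_left[symmetric])
  also have "\<dots> = (\<Sum>j<d. \<Sum>k<d. f (mu k) * c j k)"
    using key by (intro sum.cong refl) auto
  also have "\<dots> = (\<Sum>k<d. \<Sum>j<d. f (mu k) * c j k)" by (rule sum.swap)
  also have "\<dots> = (\<Sum>k<d. f (mu k))"
    using col by (simp add: sum_distrib_left[symmetric])
  finally show ?thesis .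
qed



lemma powr_inv_pow:
  fixes x :: real
  assumes "x \<ge> 0" "n \<ge> 1"
  shows "(x powr (1 / real n)) ^ n = x"
proof (cases "x = 0")
  case True then show ?thesis using assms by simp
next
  case False
  then have "x > 0" using assms by simp
  then have "(x powr (1 / real n)) ^ n = (x powr (1 / real n)) powr (real n)"
    by (simp add: powr_realpow)
  also have "\<dots> = x powr (1 / real n * real n)" by (simp add: powr_powr)
  also have "\<dots> = x" using assms \<open>x > 0\<close> by simp
  finally show ?thesis .
qed

lemma abs_powr_nat:
  fixes x :: real
  assumes "x \<ge> 0" "n \<ge> 1"
  shows "\<bar>x\<bar> powr (real n) = x ^ n"
proof (cases "x = 0")
  case True then show ?thesis using assms by simp
next
  case False then show ?thesis using assms by (simp add: powr_realpow)
qed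

lemma schatten_pow:
  assumes "eigdecomp d A lam v" "\<And>j. j < d \<Longrightarrow> lam j \<ge> 0" "n \<ge> 1"
  shows "schatten d (real n) A = (\<Sum>j<d. lam j ^ n) powr (1 / real n)"
proof -
  have ex: "\<exists>mu. \<exists>w. eigdecomp d A mu w" using assms(1) by blast
  from someI_ex[OF ex] obtain w where w: "eigdecomp d A (eigenvalues d A) w"
    unfolding eigenvalues_def by blast
  have "(\<Sum>j<d. \<bar>eigenvalues d A j\<bar> powr real n) = (\<Sum>j<d. \<bar>lam j\<bar> powr real n)"
    using spec_inv[OF w assms(1), of "\<lambda>x. \<bar>x\<bar> powr real n"] by simp
  also have "\<dots> = (\<Sum>j<d. lam j ^ n)" using assms(2,3) abs_powr_nat by (intro sum.cong) auto
  finally show ?thesis unfolding schatten_def by simp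
qed

lemma main_lemma:
  fixes d :: nat and e :: real and Sig MG MB v u :: "nat \<Rightarrow> nat \<Rightarrow> real" and lam sig :: "nat \<Rightarrow> real" and t :: nat
  assumes d1: "d \<ge> 1" and e0: "0 < e"
  and pN: "2 / 7 * sqrt (ln (3 * real d) / e) \<in> \<nat>" and p0: "2 / 7 * sqrt (ln (3 * real d) / e) > 0"
  and psdS: "psd d Sig" and psdG: "psd d MG" and psdB: "psd d MB"
  and sch: "schatten d (2 / 7 * sqrt (ln (3 * real d) / e)) (\<lambda>i k. MG i k + MB i k)
      \<le> (1 + e) * schatten d (2 / 7 * sqrt (ln (3 * real d) / e)) Sig"
  and lw: "loewner_ge d MG (\<lambda>i k. (1 - e) * Sig i k)"
  and edM: "eigdecomp d (\<lambda>i k. MG i k + MB i k) lam v" and edS: "eigdecomp d Sig sig u"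
  and t1: "1 \<le> t" and t2: "t \<le> d"
  and t3: "t < d \<longrightarrow> sig t < (1 - 14 * sqrt (e * ln (3 * real d))) * sig 0"
  shows "Max ((\<lambda>j. qform d Sig (v j)) ` {..<t}) \<ge> (1 - 14 * sqrt (e * ln (3 * real d))) * sig 0"
proof -
  define L where "L = ln (3 * real d)"
  define g where "g = 14 * sqrt (e * L)"
  define M where "M = (\<lambda>i k. MG i k + MB i k)"
  obtain n where pn: "2 / 7 * sqrt (L / e) = real n" using pN unfolding L_def by (auto elim: Nats_cases)
  have "real n > 0" using p0 pn unfolding L_def by linarith
  then have n1: "n \<ge> 1" by simp
  have L1: "L > 1"
  proof -
    have "ln 3 \<le> ln (3 * real d)" using d1 by simp
    then show ?thesis using ln3_gt_1 L_def by linarith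
  qed
  have d0: "0 < d" using d1 by simp
  have qS_nn: "qform d Sig x \<ge> 0" for x using psdS unfolding psd_def by blast
  have fin: "finite ((\<lambda>j. qform d Sig (v j)) ` {..<t})" by simp
  have Max_ge: "qform d Sig (v j) \<le> Max ((\<lambda>j. qform d Sig (v j)) ` {..<t})" if "j < t" for j
    using that by (intro Max_ge fin) auto
  have sig0_nn: "sig 0 \<ge> 0" using qform_eigvec[OF edS d0] qS_nn by metis
  show ?thesis
  proof (cases "g < 1 \<and> sig 0 > 0")
    case False
    then have "(1 - g) * sig 0 \<le> 0" using sig0_nn
      by (cases "g < 1") (auto simp: mult_nonpos_nonneg)
    moreover have "0 \<le> qform d Sig (v 0)" by (rule qS_nn)
    ultimately show ?thesis using Max_ge[of 0] t1 unfolding g_def L_def by linarith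
  next
    case True
    then have g1: "g < 1" and s0: "sig 0 > 0" by auto
    have g0: "g > 0" using e0 L1 g_def by simp
    have sq1: "sqrt (L / e) * e = sqrt (e * L)"
    proof -
      have "e * L = (L / e) * e^2" using e0 by (simp add: power2_eq_square field_simps)
      then have "sqrt (e * L) = sqrt (L / e) * sqrt (e^2)" by (simp only: real_sqrt_mult)
      then show ?thesis using e0 by simp
    qed
    have sq2: "sqrt (L / e) * sqrt (e * L) = L"
    proof -
      have "sqrt (L / e) * sqrt (e * L) = sqrt ((L / e) * (e * L))" by (simp only: real_sqrt_mult)
      also have "(L / e) * (e * L) = L^2" using e0 by (simp add: power2_eq_square field_simps)
      also have "sqrt (L^2) = L" using L1 by simp
      finally show ?thesis .
    qed
    have neps: "real n * e = g / 49"
      using pn[symmetric] sq1 unfolding g_def by (simp add: algebra_simps)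
    have ng: "real n * g / 4 = L"
    proof -
      have "real n * g / 4 = (2/7 * 14 / 4) * (sqrt (L / e) * sqrt (e * L))"
        using pn[symmetric] unfolding g_def by (simp add: algebra_simps)
      then show ?thesis using sq2 by simp
    qed
    have tail: "real d * (1 - g/4)^n \<le> 1/3"
    proof -
      have "(1 - g/4)^n \<le> exp (- (g/4)) ^ n"
        using g1 g0 by (intro power_mono) (use exp_ge_add_one_self[of "-(g/4)"] in auto)
      also have "\<dots> = exp (- L)" using ng by (simp add: exp_of_nat_mult[symmetric])
      also have "\<dots> = 1 / (3 * real d)" using d0 by (simp add: L_def exp_minus exp_ln inverse_eq_divide)
      finally have "real d * (1 - g/4)^n \<le> real d * (1 / (3 * real d))"
        using d0 by (intro mult_left_mono) auto
      also have "\<dots> = 1/3" using d0 by simp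
      finally show ?thesis .
    qed
    have ov: "\<forall>j<d. \<forall>l<d. (\<Sum>i<d. v j i * v l i) = (if j = l then 1 else 0)"
      using edM unfolding eigdecomp_def M_def by blast
    have ou: "\<forall>j<d. \<forall>l<d. (\<Sum>i<d. u j i * u l i) = (if j = l then 1 else 0)"
      using edS unfolding eigdecomp_def by blast
    have cv: "\<And>i l. i<d \<Longrightarrow> l<d \<Longrightarrow> (\<Sum>j<d. v j i * v j l) = (if i = l then 1 else 0)"
      using orth_complete[OF ov] by blast
    have cu: "\<And>i l. i<d \<Longrightarrow> l<d \<Longrightarrow> (\<Sum>j<d. u j i * u j l) = (if i = l then 1 else 0)"
      using orth_complete[OF ou] by blast
    define c where "c j k = (\<Sum>i<d. v j i * u k i)^2" for j k
    have row: "(\<Sum>k<d. c j k) = 1" if j: "j < d" for j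
    proof -
      have "(\<Sum>k<d. c j k) = (\<Sum>i<d. v j i ^ 2)" unfolding c_def by (rule parseval[OF cu])
      also have "\<dots> = 1" using ov j by (simp add: power2_eq_square)
      finally show ?thesis .
    qed
    have col: "(\<Sum>j<d. c j k) = 1" if k: "k < d" for k
    proof -
      have "(\<Sum>j<d. c j k) = (\<Sum>j<d. (\<Sum>i<d. u k i * v j i)^2)" unfolding c_def by (simp add: mult.commute)
      also have "\<dots> = (\<Sum>i<d. u k i ^ 2)" by (rule parseval[OF cv])
      also have "\<dots> = 1" using ou k by (simp add: power2_eq_square)
      finally show ?thesis .
    qed
    have qM_nn: "qform d M x \<ge> 0" for x
      using psdG psdB unfolding M_def psd_def qform_add by (metis add_nonneg_nonneg)
    have edM': "eigdecomp d M lam v" using edM unfolding M_def .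
    have lam_nn: "lam j \<ge> 0" if "j < d" for j using qform_eigvec[OF edM' that] qM_nn by metis
    have sg_nn: "sig k \<ge> 0" if "k < d" for k using qform_eigvec[OF edS that] qS_nn by metis
    have lam_sorted: "\<And>j l. j \<le> l \<Longrightarrow> l < d \<Longrightarrow> lam l \<le> lam j"
      using edM' unfolding eigdecomp_def by blast
    have sg_sorted: "\<And>j l. j \<le> l \<Longrightarrow> l < d \<Longrightarrow> sig l \<le> sig j"
      using edS unfolding eigdecomp_def by blast
    have jen: "(\<Sum>j<d. c j k * lam j) \<ge> (1 - e) * sig k" if k: "k < d" for k
    proof -
      have "(\<Sum>j<d. c j k * lam j) = qform d M (u k)"
        unfolding qform_dec[OF edM'] c_def by (intro sum.cong refl) (simp add: mult.commute)
      also have "qform d M (u k) = qform d MG (u k) + qform d MB (u k)"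
        unfolding M_def by (rule qform_add)
      finally have 1: "(\<Sum>j<d. c j k * lam j) = qform d MG (u k) + qform d MB (u k)" .
      have "qform d (\<lambda>i k. MG i k - (1 - e) * Sig i k) (u k) \<ge> 0"
        using lw unfolding loewner_ge_def psd_def by blast
      then have "qform d MG (u k) \<ge> (1 - e) * qform d Sig (u k)"
        unfolding qform_diff qform_scale by simp
      moreover have "qform d MB (u k) \<ge> 0" using psdB unfolding psd_def by blast
      ultimately show ?thesis using 1 qform_eigvec[OF edS k] by simp
    qed
    have schat: "(\<Sum>j<d. lam j ^ n) \<le> (1 + e)^n * (\<Sum>k<d. sig k ^ n)"
    proof -
      define X where "X = (\<Sum>j<d. lam j ^ n)"
      define Y where "Y = (\<Sum>k<d. sig k ^ n)"
      have X0: "X \<ge> 0" unfolding X_def using lam_nn by (auto intro!: sum_nonneg)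
      have Y0: "Y \<ge> 0" unfolding Y_def using sg_nn by (auto intro!: sum_nonneg)
      have "X powr (1 / real n) \<le> (1 + e) * Y powr (1 / real n)"
        using sch unfolding L_def[symmetric] pn
        unfolding M_def[symmetric] using schatten_pow[OF edM' lam_nn n1] schatten_pow[OF edS sg_nn n1]
        unfolding X_def Y_def by simp
      then have "(X powr (1 / real n)) ^ n \<le> ((1 + e) * Y powr (1 / real n)) ^ n"
        by (intro power_mono) auto
      then show ?thesis using powr_inv_pow[OF X0 n1] powr_inv_pow[OF Y0 n1]
        unfolding X_def Y_def by (simp add: power_mult_distrib)
    qed
    have t3': "t < d \<longrightarrow> sig t < (1 - g) * sig 0" using t3 unfolding g_def L_def .
    have cnn: "\<And>j k. c j k \<ge> 0" by (simp add: c_def)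
    have ng': "1 \<le> real n * g / 4" using ng L1 by simp
    obtain j where j: "j < t" "(\<Sum>k<d. sig k * c j k) \<ge> (1 - g) * sig 0"
      using core[OF cnn row col lam_nn lam_sorted sg_nn sg_sorted s0 jen schat t1 t2 t3' g0 g1 neps e0 tail ng'] by blast
    have "qform d Sig (v j) = (\<Sum>k<d. sig k * c j k)"
      unfolding qform_dec[OF edS] c_def by simp
    then show ?thesis using j Max_ge[of j] unfolding g_def L_def by linarith
  qed
qed

theorem proposition4:
  shows "\<exists>c>0. \<forall>(d::nat) (\<epsilon>::real) (Sig::nat \<Rightarrow> nat \<Rightarrow> real) MG MB lam v sig u (t::nat).
    let p = 2 / 7 * sqrt (ln (3 * real d) / \<epsilon>);
        \<gamma> = 14 * sqrt (\<epsilon> * ln (3 * real d));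
        M = (\<lambda>i k. MG i k + MB i k)
    in (d \<ge> 1 \<and> 0 < \<epsilon> \<and> \<epsilon> < c \<and> p \<in> \<nat> \<and> p > 0
        \<and> psd d Sig \<and> psd d MG \<and> psd d MB
        \<and> schatten d p M \<le> (1 + \<epsilon>) * schatten d p Sig
        \<and> loewner_ge d (\<lambda>i k. (1 + \<epsilon>) * Sig i k) MG
        \<and> loewner_ge d MG (\<lambda>i k. (1 - \<epsilon>) * Sig i k)
        \<and> eigdecomp d M lam v \<and> eigdecomp d Sig sig u
        \<and> 1 \<le> t \<and> t \<le> d \<and> (t < d \<longrightarrow> sig t < (1 - \<gamma>) * sig 0))
       \<longrightarrow> Max ((\<lambda>j. qform d Sig (v j)) ` {..<t}) \<ge> (1 - \<gamma>) * sig 0"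
  apply (rule exI[of _ "1::real"])
  apply (simp only: Let_def)
  apply (intro conjI allI impI)
   apply simp
  apply (elim conjE)
  apply (blast intro: main_lemma)
  done

end
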